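(* Let $G$ be a finite abelian group, $T \subsetneq G$ a non-empty subset, and fix $x \in G$ with $T + x \ne T$. Put $T^{\uparrow} = T + x$, $C^{\uparrow} = T^{\uparrow}\setminus T$, $C^{\downarrow} = T \setminus T^{\uparrow}$ and $A = T \cup T^{\uparrow}$. For integers $1 \le i \le d$ let $C_{i,d} = C^{\downarrow}\times\dots\times C^{\downarrow}\times C^{\uparrow}\times C^{\downarrow}\times\dots\times C^{\downarrow} \subset A^d$ (with $d$ factors, $C^{\uparrow}$ in the $i$-th factor), and let $C_{0,d} = (C^{\downarrow})^d$. Then for any integers $d \ge 1$ and $0 \le i \le d$, the set $A^d \setminus C_{i,d} \subset G^d$ is $T$-tilable.
   Context: A copy of $T$ in $G^d$ is a translate $\mathsf{T}_j + y$ ($y\in G^d$, $1\le j\le d$), where $\mathsf{T}_j\subset G^d$ is the set of points with $j$-th coordinate in $T$ and all other coordinates $0$. A subset of $G^d$ is $T$-tilable if it is a disjoint union of copies of $T$. *)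

theory Defs
  imports Main "HOL-Library.Disjoint_Sets"
begin

text \<open>Points of G^d are modelled as functions nat => G that vanish from index d on;
coordinates are indexed 0,...,d-1 (coordinate j here is coordinate j+1 of the paper).\<close>

definition Gpow :: "nat \<Rightarrow> (nat \<Rightarrow> 'a::zero) set" where
  "Gpow d = {p. \<forall>k\<ge>d. p k = 0}"

definition box :: "nat \<Rightarrow> (nat \<Rightarrow> 'a::zero set) \<Rightarrow> (nat \<Rightarrow> 'a) set" where
  "box d S = {p \<in> Gpow d. \<forall>k<d. p k \<in> S k}"

definition axis_set :: "nat \<Rightarrow> 'a::zero set \<Rightarrow> (nat \<Rightarrow> 'a) set" where
  "axis_set j T = {(\<lambda>k. if k = j then t else 0) | t. t \<in> T}"

definition is_copy :: "nat \<Rightarrow> 'a::ab_group_add set \<Rightarrow> (nat \<Rightarrow> 'a) set \<Rightarrow> bool" where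
  "is_copy d T C \<longleftrightarrow> (\<exists>y\<in>Gpow d. \<exists>j<d. C = (\<lambda>p k. p k + y k) ` axis_set j T)"

definition tilable :: "nat \<Rightarrow> 'a::ab_group_add set \<Rightarrow> (nat \<Rightarrow> 'a) set \<Rightarrow> bool" where
  "tilable d T S \<longleftrightarrow> (\<exists>\<C>. (\<forall>C\<in>\<C>. is_copy d T C) \<and> disjoint \<C> \<and> \<Union>\<C> = S)"

end

theory Submission
  imports Defs
begin

definition tile :: "nat \<Rightarrow> 'a::ab_group_add set \<Rightarrow> (nat \<Rightarrow> 'a) \<Rightarrow> (nat \<Rightarrow> 'a) set" where
  "tile k T y = (\<lambda>p l. p l + y l) ` axis_set k T"

lemma mem_tile: "q \<in> tile k T y \<longleftrightarrow> q k - y k \<in> T \<and> (\<forall>l. l \<noteq> k \<longrightarrow> q l = y l)"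
proof
  assume "q \<in> tile k T y"
  then obtain t where "t \<in> T" "q = (\<lambda>l. (if l = k then t else 0) + y l)"
    unfolding tile_def axis_set_def by auto
  then show "q k - y k \<in> T \<and> (\<forall>l. l \<noteq> k \<longrightarrow> q l = y l)" by auto
next
  assume h: "q k - y k \<in> T \<and> (\<forall>l. l \<noteq> k \<longrightarrow> q l = y l)"
  have "q = (\<lambda>l. (if l = k then q k - y k else 0) + y l)"
    using h by (auto simp: fun_eq_iff)
  then show "q \<in> tile k T y" unfolding tile_def axis_set_def using h
    by (intro image_eqI[where x="\<lambda>l. if l = k then q k - y k else 0"]) auto
qed

lemma tiling:
  fixes S :: "nat \<Rightarrow> 'a::ab_group_add set" and c :: "nat \<Rightarrow> 'a"
  assumes SA: "\<And>k. S k \<subseteq> A" and AS: "\<And>k. A - S k = (\<lambda>t. t + c k) ` T"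
  shows "tilable d T (box d (\<lambda>_. A) - box d S)"
proof -
  have key: "\<And>k z. z \<in> A - S k \<longleftrightarrow> z - c k \<in> T"
  proof -
    fix k z
    have "z \<in> (\<lambda>t. t + c k) ` T \<longleftrightarrow> z - c k \<in> T"
      by (auto intro: image_eqI[where x="z - c k"])
    then show "z \<in> A - S k \<longleftrightarrow> z - c k \<in> T" using AS[of k] by simp
  qed
  define F where "F = {tile k T y | k y. k < d \<and> y \<in> Gpow d \<and> y k = c k \<and> (\<forall>j<k. y j \<in> A)
        \<and> (\<forall>j. k < j \<and> j < d \<longrightarrow> y j \<in> S j)}"
  have copy: "\<forall>C\<in>F. is_copy d T C"
    unfolding F_def is_copy_def tile_def by blast
  have inter: "k = k' \<and> y = y'" if
      h: "k < d" "y \<in> Gpow d" "y k = c k" "\<forall>j<k. y j \<in> A" "\<forall>j. k < j \<and> j < d \<longrightarrow> y j \<in> S j"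
      and h': "k' < d" "y' \<in> Gpow d" "y' k' = c k'" "\<forall>j<k'. y' j \<in> A" "\<forall>j. k' < j \<and> j < d \<longrightarrow> y' j \<in> S j"
      and q: "q \<in> tile k T y" "q \<in> tile k' T y'" for k k' y y' q
  proof -
    have "k = k'"
    proof (rule ccontr)
      assume "k \<noteq> k'"
      then consider "k < k'" | "k' < k" by linarith
      then show False
      proof cases
        case 1
        then have "q k' = y k'" using q(1) by (simp add: mem_tile)
        then have "q k' \<in> S k'" using h 1 h' by auto
        moreover have "q k' - c k' \<in> T" using q(2) h' by (simp add: mem_tile)
        ultimately show False using key by blast
      next
        case 2
        then have "q k = y' k" using q(2) by (simp add: mem_tile)
        then have "q k \<in> S k" using h 2 h' by auto
        moreover have "q k - c k \<in> T" using q(1) h by (simp add: mem_tile)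
        ultimately show False using key by blast
      qed
    qed
    moreover have "y = y'"
    proof
      fix l show "y l = y' l"
        using q `k = k'` h(3) h'(3) by (cases "l = k") (auto simp: mem_tile)
    qed
    ultimately show ?thesis by simp
  qed
  have disj: "disjoint F"
  proof (rule disjointI)
    fix a b assume a: "a \<in> F" and b: "b \<in> F" and ne: "a \<noteq> b"
    from a obtain k y where ha: "a = tile k T y" "k < d" "y \<in> Gpow d" "y k = c k" "\<forall>j<k. y j \<in> A"
      "\<forall>j. k < j \<and> j < d \<longrightarrow> y j \<in> S j" unfolding F_def by blast
    from b obtain k' y' where hb: "b = tile k' T y'" "k' < d" "y' \<in> Gpow d" "y' k' = c k'" "\<forall>j<k'. y' j \<in> A"
      "\<forall>j. k' < j \<and> j < d \<longrightarrow> y' j \<in> S j" unfolding F_def by blast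
    show "a \<inter> b = {}"
    proof (rule ccontr)
      assume "a \<inter> b \<noteq> {}"
      then obtain q where "q \<in> tile k T y" "q \<in> tile k' T y'" using ha(1) hb(1) by blast
      then have "k = k' \<and> y = y'" using inter ha(2-6) hb(2-6) by blast
      then show False using ne ha(1) hb(1) by simp
    qed
  qed
  have sub1: "\<Union>F \<subseteq> box d (\<lambda>_. A) - box d S"
  proof
    fix q assume "q \<in> \<Union>F"
    then obtain k y where h: "k < d" "y \<in> Gpow d" "y k = c k" "\<forall>j<k. y j \<in> A"
      "\<forall>j. k < j \<and> j < d \<longrightarrow> y j \<in> S j" and q: "q \<in> tile k T y"
      unfolding F_def by blast
    have qk: "q k \<in> A - S k" using q h key[of "q k" k] by (simp add: mem_tile)
    have "q \<in> Gpow d" using q h unfolding Gpow_def by (auto simp: mem_tile)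
    moreover have "\<forall>l<d. q l \<in> A"
    proof (intro allI impI)
      fix l assume "l < d"
      show "q l \<in> A"
      proof (cases l k rule: linorder_cases)
        case less then show ?thesis using q h by (simp add: mem_tile)
      next
        case equal then show ?thesis using qk by simp
      next
        case greater then show ?thesis using q h SA `l < d` by (auto simp: mem_tile)
      qed
    qed
    moreover have "q \<notin> box d S" using qk h unfolding box_def by auto
    ultimately show "q \<in> box d (\<lambda>_. A) - box d S" unfolding box_def by auto
  qed
  have sub2: "box d (\<lambda>_. A) - box d S \<subseteq> \<Union>F"
  proof
    fix q assume "q \<in> box d (\<lambda>_. A) - box d S"
    then have G: "q \<in> Gpow d" and QA: "\<forall>l<d. q l \<in> A" and ex: "\<exists>l<d. q l \<notin> S l"
      unfolding box_def by auto
    define K where "K = {l. l < d \<and> q l \<notin> S l}"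
    define k where "k = Max K"
    have fK: "finite K" "K \<noteq> {}" using ex unfolding K_def by auto
    have kK: "k \<in> K" using fK Max_in k_def by blast
    have kmax: "\<And>j. k < j \<Longrightarrow> j < d \<Longrightarrow> q j \<in> S j"
      using fK k_def K_def Max_ge not_le by blast
    define y where "y = q(k := c k)"
    have kd: "k < d" and qk: "q k \<notin> S k" using kK K_def by auto
    have "q k - c k \<in> T" using qk QA kd key by blast
    then have "q \<in> tile k T y" by (simp add: mem_tile y_def)
    moreover have "y \<in> Gpow d" using G kd unfolding y_def Gpow_def by auto
    moreover have "\<forall>j<k. y j \<in> A" using QA kd unfolding y_def by auto
    moreover have "\<forall>j. k < j \<and> j < d \<longrightarrow> y j \<in> S j" using kmax unfolding y_def by auto
    moreover have "y k = c k" unfolding y_def by simp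
    ultimately have "tile k T y \<in> F" "q \<in> tile k T y" unfolding F_def using kd by blast+
    then show "q \<in> \<Union>F" by blast
  qed
  show ?thesis unfolding tilable_def using copy disj sub1 sub2 by blast
qed

theorem proposition10:
  fixes T :: "'a::{ab_group_add, finite} set" and x :: 'a and d i :: nat
  assumes "T \<noteq> {}" and "T \<noteq> UNIV"
    and "(\<lambda>t. t + x) ` T \<noteq> T"
    and "1 \<le> d" and "i \<le> d"
  shows "let Tup = (\<lambda>t. t + x) ` T; Cup = Tup - T; Cdown = T - Tup; A = T \<union> Tup
         in tilable d T (box d (\<lambda>_. A) - box d (\<lambda>k. if k + 1 = i then Cup else Cdown))"
proof -
  define Tup where "Tup = (\<lambda>t. t + x) ` T"
  have "tilable d T (box d (\<lambda>_. T \<union> Tup) - box d (\<lambda>k. if k + 1 = i then Tup - T else T - Tup))"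
  proof (rule tiling[where c="\<lambda>k. if k + 1 = i then 0 else x"])
    fix k
    show "(if k + 1 = i then Tup - T else T - Tup) \<subseteq> T \<union> Tup" by auto
    show "T \<union> Tup - (if k + 1 = i then Tup - T else T - Tup) =
          (\<lambda>t. t + (if k + 1 = i then 0 else x)) ` T"
      by (auto simp: Tup_def)
  qed
  then show ?thesis unfolding Let_def Tup_def .
qed

end
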